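(* Let $\omega\in\mathbb{R}^d$, let $I_\omega=\{(k,l)\in\mathbb{Z}^d\times\mathbb{Z}:\langle k,\omega\rangle+l=0\}$, let $c$ be the rank of the lattice $I_\omega$, and let $(p_1,q_1),\dots,(p_c,q_c)\in I_\omega$ be linearly independent. Then $$\mathbb{X}_{p,q}\cap\mathcal{B}_\omega=\overline{\mathcal{B}}_\omega,$$ i.e. every Birkhoff configuration $x$ of rotation vector $\omega$ with $\tau_{p_j,q_j}x=x$ for $j=1,\dots,c$ satisfies $\tau_{k,l}x=x$ for all $(k,l)\in I_\omega$.
   Context: For $(k,l)\in\mathbb{Z}^d\times\mathbb{Z}$ the shift operator $\tau_{k,l}:\mathbb{R}^{\mathbb{Z}^d}\to\mathbb{R}^{\mathbb{Z}^d}$ is $(\tau_{k,l}x)_i=x_{i+k}+l$. On $\mathbb{R}^{\mathbb{Z}^d}$: $x\le y$ iff $x_i\le y_i$ for all $i$. A configuration $x$ is Birkhoff if for every $(k,l)$ either $\tau_{k,l}x\ge x$ or $\tau_{k,l}x\le x$. A vector $\omega\in\mathbb{R}^d$ is the rotation vector of $x$ if for every $i\in\mathbb{Z}^d$, $\lim_{n\to\infty}x_{ni}/n=\langle\omega,i\rangle$. $\mathcal{B}_\omega$ denotes the set of Birkhoff configurations with rotation vector $\omega$, and $\overline{\mathcal{B}}_\omega=\{x\in\mathcal{B}_\omega:\tau_{k,l}x=x\text{ whenever }\langle\omega,k\rangle+l=0\}$. $\mathbb{X}_{p,q}=\{x\in\mathbb{R}^{\mathbb{Z}^d}:\tau_{p_j,q_j}x=x\text{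 for all }j=1,\dots,c\}$. *)

theory Defs
  imports "HOL-Analysis.Analysis"
begin

text \<open>Configurations are maps from the lattice Z^d (modelled as int ^ 'd, 'd a finite
index type of cardinality d) to the reals; they are ordered pointwise.\<close>

type_synonym 'd config = "int ^ 'd \<Rightarrow> real"

definition shift :: "int ^ 'd \<Rightarrow> int \<Rightarrow> 'd config \<Rightarrow> 'd config" where
  "shift k l x = (\<lambda>i. x (i + k) + of_int l)"

definition pair_ip :: "real ^ 'd \<Rightarrow> int ^ 'd \<Rightarrow> real" where
  "pair_ip \<omega> k = (\<Sum>i\<in>UNIV. \<omega> $ i * of_int (k $ i))"

definition birkhoff :: "('d::finite) config \<Rightarrow> bool" where
  "birkhoff x \<longleftrightarrow> (\<forall>k l. shift k l x \<ge> x \<or> shift k l x \<le> x)"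

definition has_rotation_vector :: "('d::finite) config \<Rightarrow> real ^ 'd \<Rightarrow> bool" where
  "has_rotation_vector x \<omega> \<longleftrightarrow>
     (\<forall>i. (\<lambda>n::nat. x (of_nat n *s i) / real n) \<longlonglongrightarrow> pair_ip \<omega> i)"

definition Birk :: "real ^ ('d::finite) \<Rightarrow> 'd config set" where
  "Birk \<omega> = {x. birkhoff x \<and> has_rotation_vector x \<omega>}"

definition resonances :: "real ^ ('d::finite) \<Rightarrow> ((int ^ 'd) \<times> int) set" where
  "resonances \<omega> = {(k, l). pair_ip \<omega> k + of_int l = 0}"

definition Birk_bar :: "real ^ ('d::finite) \<Rightarrow> 'd config set" where
  "Birk_bar \<omega> = {x \<in> Birk \<omega>. \<forall>(k, l) \<in> resonances \<omega>. shift k l x = x}"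

definition Xpq :: "nat \<Rightarrow> (nat \<Rightarrow> int ^ ('d::finite)) \<Rightarrow> (nat \<Rightarrow> int) \<Rightarrow> 'd config set" where
  "Xpq c p q = {x. \<forall>j<c. shift (p j) (q j) x = x}"

text \<open>Embedding of Z^d x Z into the real vector space R^(d+1) (index type 'd option).\<close>
definition emb :: "(int ^ ('d::finite)) \<times> int \<Rightarrow> real ^ ('d option)" where
  "emb kl = (\<chi> i. case i of None \<Rightarrow> of_int (snd kl) | Some j \<Rightarrow> of_int (fst kl $ j))"

text \<open>Rank of a subgroup of Z^(d+1): dimension of its real span.\<close>
definition lattice_rank :: "((int ^ ('d::finite)) \<times> int) set \<Rightarrow> nat" where
  "lattice_rank S = dim (emb ` S)"

text \<open>Linear independence of the family v_0,...,v_(c-1) in Z^(d+1) (over R, equivalently Q).\<close>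
definition lin_indep_family :: "nat \<Rightarrow> (nat \<Rightarrow> (int ^ ('d::finite)) \<times> int) \<Rightarrow> bool" where
  "lin_indep_family c v \<longleftrightarrow> inj_on (emb \<circ> v) {..<c} \<and> independent ((emb \<circ> v) ` {..<c})"

end

theory Submission
  imports Defs
begin

lemma shift_comp: "shift k l (shift k' l' x) = shift (k + k') (l + l') x"
  by (auto simp: shift_def algebra_simps)

lemma shift_0: "shift 0 0 x = x"
  by (auto simp: shift_def)

lemma shift_neg: assumes "shift k l x = x" shows "shift (-k) (-l) x = x"
proof -
  have "shift (-k) (-l) x = shift (-k) (-l) (shift k l x)" using assms by simp
  also have "\<dots> = x" by (simp add: shift_comp shift_0)
  finally show ?thesis .
qed

lemma shift_add: assumes "shift k l x = x" "shift k' l' x = x"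
  shows "shift (k + k') (l + l') x = x"
  using assms by (metis shift_comp)

lemma shift_nat_mult: assumes "shift k l x = x"
  shows "shift (int n *s k) (int n * l) x = x"
proof (induction n)
  case 0 then show ?case by (simp add: shift_0)
next
  case (Suc n)
  have "shift (int (Suc n) *s k) (int (Suc n) * l) x = shift (k + int n *s k) (l + int n * l) x"
    by (simp add: algebra_simps vector_sadd_rdistrib)
  also have "\<dots> = x" using shift_add[OF assms Suc] by simp
  finally show ?case .
qed

lemma shift_int_mult: assumes "shift k l x = x"
  shows "shift (m *s k) (m * l) x = x"
proof (cases "m \<ge> 0")
  case True
  then obtain n where "m = int n" by (metis nonneg_eq_int)
  then show ?thesis using shift_nat_mult[OF assms] by simp
next
  case False
  then obtain n where m: "m = - int n" by (metis le_cases neg_0_le_iff_le nonneg_eq_int minus_minus)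
  have "shift (int n *s k) (int n * l) x = x" using shift_nat_mult[OF assms] .
  from shift_neg[OF this] show ?thesis using m by (simp add: vector_sneg_minus1)
qed

lemma shift_sum:
  assumes "\<forall>j<(c::nat). shift (p j) (q j) x = x"
  shows "shift (\<Sum>j<c. P j *s p j) (\<Sum>j<c. P j * q j) x = x"
  using assms
proof (induction c)
  case 0 then show ?case by (simp add: shift_0)
next
  case (Suc c)
  then show ?case
    using shift_add[OF Suc.IH shift_int_mult[of "p c" "q c" x "P c"]] by simp
qed

lemma shift_mono: "x \<le> y \<Longrightarrow> shift k l x \<le> shift k l y"
  by (auto simp: shift_def le_fun_def)

lemma shift_iter: "(shift k l ^^ n) x = shift (int n *s k) (int n * l) x"
proof (induction n)
  case 0 then show ?case by (simp add: shift_0)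
next
  case (Suc n)
  then show ?case by (simp add: shift_comp algebra_simps vector_sadd_rdistrib)
qed

lemma fixed_by_power:
  assumes b: "shift k l x \<ge> x \<or> shift k l x \<le> x"
    and Q: "Q > 0" and fx: "shift (Q *s k) (Q * l) x = x"
  shows "shift k l x = x"
proof -
  obtain n where n: "Q = int n" "n > 0" using Q by (metis pos_int_cases of_nat_0_less_iff)
  have pw: "(shift k l ^^ n) x = x" using fx n by (simp add: shift_iter)
  let ?s = "shift k l"
  show ?thesis using b
  proof
    assume h: "?s x \<ge> x"
    have up: "(?s ^^ m) x \<ge> x" for m
      by (induction m) (auto intro: order_trans[OF h] shift_mono)
    have "(?s ^^ Suc m) x \<ge> ?s x" for m using shift_mono[OF up[of m]] by simp
    from this[of "n - 1"] have "?s x \<le> x" using pw n by simp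
    with h show ?thesis by simp
  next
    assume h: "?s x \<le> x"
    have up: "(?s ^^ m) x \<le> x" for m
      by (induction m) (auto intro: order_trans[OF _ h] shift_mono)
    have "(?s ^^ Suc m) x \<le> ?s x" for m using shift_mono[OF up[of m]] by simp
    from this[of "n - 1"] have "?s x \<ge> x" using pw n by simp
    with h show ?thesis by simp
  qed
qed


lemma emb_component_Some: "emb kl $ Some j = of_int (fst kl $ j)"
  by (simp add: emb_def)
lemma emb_component_None: "emb kl $ None = of_int (snd kl)"
  by (simp add: emb_def)

lemma resonance_fixed:
  fixes \<omega> :: "real ^ 'd::finite"
    and c :: nat
    and p :: "nat \<Rightarrow> int ^ 'd"
    and q :: "nat \<Rightarrow> int"
  assumes c: "c = lattice_rank (resonances \<omega>)"
    and res: "\<forall>j<c. (p j, q j) \<in> resonances \<omega>"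
    and li: "lin_indep_family c (\<lambda>j. (p j, q j))"
    and kl: "(k, l) \<in> resonances \<omega>"
  obtains Q :: int and P where "Q > 0" "Q *s k = (\<Sum>j<c. P j *s p j)" "Q * l = (\<Sum>j<c. P j * q j)"
proof -
  define e where "e = (\<lambda>j. emb (p j, q j))"
  define B where "B = e ` {..<c}"
  have injB: "inj_on e {..<c}" and indB: "independent B"
    using li by (auto simp: lin_indep_family_def e_def B_def o_def)
  have cardB: "card B = c" using injB by (simp add: B_def card_image)
  have BV: "B \<subseteq> emb ` resonances \<omega>" using res by (auto simp: B_def e_def)
  have "emb ` resonances \<omega> \<subseteq> span B"
    by (rule card_ge_dim_independent[OF BV indB]) (simp add: cardB c lattice_rank_def)
  then have "emb (k, l) \<in> span B" using kl by auto
  then obtain u where u: "emb (k, l) = (\<Sum>v\<in>B. u v *\<^sub>R v)"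
    by (auto simp: span_finite B_def)
  define r where "r = (\<lambda>j. u (e j))"
  have er: "emb (k, l) = (\<Sum>j<c. r j *\<^sub>R e j)"
    using u by (simp add: B_def sum.reindex[OF injB] r_def)
  define S where "S = (\<Sum>j<c. norm (e j))"
  obtain n :: nat where "S < real n" using reals_Archimedean2 by blast
  define N where "N = Suc n"
  have N: "real N > S" "N > 0" using \<open>S < real n\<close> by (auto simp: N_def)
  obtain Q :: int and P where Q: "0 < Q" and P: "\<And>i. i<c \<Longrightarrow> \<bar>of_int Q * r i - of_int (P i)\<bar> < 1/N"
    using Dirichlet_approx_simult[OF N(2), where \<theta>=r and n=c] by metis
  define w where "w = (\<Sum>j<c. (of_int Q * r j - of_int (P j)) *\<^sub>R e j)"
  have "norm w \<le> (\<Sum>j<c. norm ((of_int Q * r j - of_int (P j)) *\<^sub>R e j))"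
    unfolding w_def by (rule norm_sum)
  also have "\<dots> \<le> (\<Sum>j<c. (1/N) * norm (e j))"
  proof (rule sum_mono)
    fix j assume "j \<in> {..<c}"
    then have "\<bar>of_int Q * r j - of_int (P j)\<bar> \<le> 1/N" using P[of j] by auto
    then show "norm ((of_int Q * r j - of_int (P j)) *\<^sub>R e j) \<le> (1/N) * norm (e j)"
      by (simp only: norm_scaleR) (rule mult_right_mono, auto)
  qed
  also have "\<dots> = S / N" by (simp add: S_def sum_divide_distrib)
  also have "\<dots> < 1" using N by simp
  finally have nw: "norm w < 1" .
  have wcomp: "\<bar>w $ t\<bar> < 1" for t using component_le_norm_cart[of w t] nw by linarith
  have w2: "w = of_int Q *\<^sub>R emb (k, l) - (\<Sum>j<c. of_int (P j) *\<^sub>R e j)"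
    unfolding w_def er by (simp add: scaleR_sum_right scaleR_left_diff_distrib sum_subtractf)
  have zero: "z = 0" if "\<bar>(of_int z::real)\<bar> < 1" for z :: int
    using that by linarith
  have "Q * k $ i - (\<Sum>j<c. P j * p j $ i) = 0" for i
  proof (rule zero)
    have "of_int (Q * k $ i - (\<Sum>j<c. P j * p j $ i)) = w $ Some i"
      by (simp add: w2 e_def emb_def)
    then show "\<bar>(of_int (Q * k $ i - (\<Sum>j<c. P j * p j $ i))::real)\<bar> < 1" using wcomp by simp
  qed
  then have "Q *s k = (\<Sum>j<c. P j *s p j)" by (simp add: vec_eq_iff)
  moreover have "Q * l - (\<Sum>j<c. P j * q j) = 0"
  proof (rule zero)
    have "of_int (Q * l - (\<Sum>j<c. P j * q j)) = w $ None"
      by (simp add: w2 e_def emb_def)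
    then show "\<bar>(of_int (Q * l - (\<Sum>j<c. P j * q j))::real)\<bar> < 1" using wcomp by simp
  qed
  ultimately show ?thesis using that Q by simp
qed

theorem mainTheorem2:
  fixes \<omega> :: "real ^ 'd::finite"
    and c :: nat
    and p :: "nat \<Rightarrow> int ^ 'd"
    and q :: "nat \<Rightarrow> int"
  assumes "c = lattice_rank (resonances \<omega>)"
    and "\<forall>j<c. (p j, q j) \<in> resonances \<omega>"
    and "lin_indep_family c (\<lambda>j. (p j, q j))"
  shows "Xpq c p q \<inter> Birk \<omega> = Birk_bar \<omega>"
proof
  show "Birk_bar \<omega> \<subseteq> Xpq c p q \<inter> Birk \<omega>"
    using assms(2) by (auto simp: Birk_bar_def Xpq_def)
next
  show "Xpq c p q \<inter> Birk \<omega> \<subseteq> Birk_bar \<omega>"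
  proof
    fix x assume x: "x \<in> Xpq c p q \<inter> Birk \<omega>"
    have inv: "\<forall>j<c. shift (p j) (q j) x = x" using x by (auto simp: Xpq_def)
    have "shift k l x = x" if kl: "(k, l) \<in> resonances \<omega>" for k l
    proof -
      obtain Q :: int and P where Q: "Q > 0" "Q *s k = (\<Sum>j<c. P j *s p j)" "Q * l = (\<Sum>j<c. P j * q j)"
        using resonance_fixed[OF assms kl] by metis
      have "shift (Q *s k) (Q * l) x = x" using shift_sum[OF inv, of P] Q by simp
      moreover have "shift k l x \<ge> x \<or> shift k l x \<le> x"
        using x by (auto simp: Birk_def birkhoff_def)
      ultimately show ?thesis using fixed_by_power Q(1) by blast
    qed
    then show "x \<in> Birk_bar \<omega>" using x by (auto simp: Birk_bar_def)
  qed
qed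

end
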